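(* For all $n\ge1$, \[ \sum_{\sigma\in\mathcal{C}_{2n+3}} t^{\mathrm{drop}(\sigma)-1}=\sum_{j=0}^{\lfloor n/2\rfloor}\gamma_{n,j}\,t^j(1+t)^{n-2j}, \] where $\gamma_{n,j}$ is the number of primary odd-odd-drop permutations in $\mathcal{C}_{2n+3}$ with $j+1$ drops.
   Context: For $\sigma\in\mathfrak{S}_m$, a drop is a pair $(i,\sigma(i))$ with $i>\sigma(i)$; $\mathrm{drop}(\sigma)$ is the number of drops; a drop is odd-odd if both $i$ and $\sigma(i)$ are odd. $\mathcal{C}_m$ is the set of cyclic permutations of $[m]$ (a single $m$-cycle) all of whose drops are odd-odd. An element $i\in[m]$ is a double drop of $\sigma$ if $\sigma^{-1}(i)>i>\sigma(i)$. A permutation $\sigma\in\mathcal{C}_{2n+3}$ is a primary odd-odd-drop permutation if it has no double drop. *)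

theory Defs
  imports "HOL-Combinatorics.Permutations" "HOL-Computational_Algebra.Polynomial"
begin

definition drops :: "(nat \<Rightarrow> nat) \<Rightarrow> nat \<Rightarrow> nat set" where
  "drops \<sigma> m = {i \<in> {1..m}. \<sigma> i < i}"

definition dropnum :: "(nat \<Rightarrow> nat) \<Rightarrow> nat \<Rightarrow> nat" where
  "dropnum \<sigma> m = card (drops \<sigma> m)"

definition is_cyclic :: "(nat \<Rightarrow> nat) \<Rightarrow> nat \<Rightarrow> bool" where
  "is_cyclic \<sigma> m \<longleftrightarrow> \<sigma> permutes {1..m} \<and>
     (\<forall>i\<in>{1..m}. \<forall>j\<in>{1..m}. \<exists>k. (\<sigma> ^^ k) i = j)"

definition all_drops_odd_odd :: "(nat \<Rightarrow> nat) \<Rightarrow> nat \<Rightarrow> bool" where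
  "all_drops_odd_odd \<sigma> m \<longleftrightarrow> (\<forall>i\<in>drops \<sigma> m. odd i \<and> odd (\<sigma> i))"

definition oddC :: "nat \<Rightarrow> (nat \<Rightarrow> nat) set" where
  "oddC m = {\<sigma>. is_cyclic \<sigma> m \<and> all_drops_odd_odd \<sigma> m}"

definition is_double_drop :: "(nat \<Rightarrow> nat) \<Rightarrow> nat \<Rightarrow> nat \<Rightarrow> bool" where
  "is_double_drop \<sigma> m i \<longleftrightarrow> i \<in> {1..m} \<and> inv \<sigma> i > i \<and> i > \<sigma> i"

definition primary :: "nat \<Rightarrow> (nat \<Rightarrow> nat) \<Rightarrow> bool" where
  "primary n \<sigma> \<longleftrightarrow> \<sigma> \<in> oddC (2*n+3) \<and> \<not> (\<exists>i. is_double_drop \<sigma> (2*n+3) i)"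

definition gamma :: "nat \<Rightarrow> nat \<Rightarrow> nat" where
  "gamma n j = card {\<sigma>. primary n \<sigma> \<and> dropnum \<sigma> (2*n+3) = j + 1}"

end

theory Submission
  imports Defs "HOL-Combinatorics.Cycles"
begin


fun des :: "nat list \<Rightarrow> nat" where
  "des (a#b#xs) = (if b < a then 1 else 0) + des (b#xs)"
| "des _ = 0"

fun okd :: "nat list \<Rightarrow> bool" where
  "okd (a#b#xs) = ((b < a \<longrightarrow> odd a \<and> odd b) \<and> okd (b#xs))"
| "okd _ = True"

fun nd :: "nat \<Rightarrow> nat list \<Rightarrow> bool" where
  "nd p (x#y#xs) = (\<not> (x < p \<and> y < x) \<and> nd x (y#xs))"
| "nd p _ = True"

fun aa :: "nat \<Rightarrow> nat list \<Rightarrow> nat" where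
  "aa p [] = 0"
| "aa p [x] = (if p < x \<and> odd x then 1 else 0)"
| "aa p (x#y#xs) = (if p < x \<and> x < y \<and> odd x then 1 else 0) + aa x (y#xs)"

definition valid :: "nat list \<Rightarrow> bool" where
  "valid w \<longleftrightarrow> (w \<noteq> [] \<longrightarrow> odd (hd w)) \<and> okd w"

definition prim :: "nat list \<Rightarrow> bool" where
  "prim w = (case w of [] \<Rightarrow> True | x#xs \<Rightarrow> nd (Suc x) w)"

definition asc :: "nat list \<Rightarrow> nat" where
  "asc w = (case w of [] \<Rightarrow> 0 | x#xs \<Rightarrow> aa x w)"

lemma des_app: "des (xs @ y # ys) = des (xs @ [y]) + des (y # ys)"
  by (induction xs rule: des.induct) auto

lemma des_snoc_big: "\<forall>x\<in>set u. x < M \<Longrightarrow> des (u @ [M]) = des u"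
  by (induction u rule: des.induct) auto

lemma des_cons_big: "\<forall>x\<in>set v. x < M \<Longrightarrow> des (M # v) = des v + (if v = [] then 0 else 1)"
  by (cases v) auto

lemma des_split: "\<forall>x\<in>set u. x < M \<Longrightarrow> \<forall>x\<in>set v. x < M \<Longrightarrow>
   des (u @ M # v) = des u + des v + (if v = [] then 0 else 1)"
  using des_app[of u M v] des_snoc_big[of u M] des_cons_big[of v M] by simp

lemma okd_app: "okd (xs @ y # ys) = (okd (xs @ [y]) \<and> okd (y # ys))"
  by (induction xs rule: okd.induct) auto

lemma okd_snoc_big: "\<forall>x\<in>set u. x < M \<Longrightarrow> okd (u @ [M]) = okd u"
  by (induction u rule: okd.induct) auto

lemma okd_cons_big: "\<forall>x\<in>set v. x < M \<Longrightarrow> okd (M # v) = (okd v \<and> (v \<noteq> [] \<longrightarrow> odd M \<and> odd (hd v)))"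
  by (cases v) auto

lemma valid_split: "\<forall>x\<in>set u. x < M \<Longrightarrow> \<forall>x\<in>set v. x < M \<Longrightarrow>
   valid (u @ M # v) = (valid u \<and> valid v \<and> (u = [] \<longrightarrow> odd M) \<and> (v \<noteq> [] \<longrightarrow> odd M))"
  unfolding valid_def using okd_app[of u M v] okd_snoc_big[of u M] okd_cons_big[of v M]
  by (cases u) auto

lemma nd_app: "xs \<noteq> [] \<Longrightarrow> nd p (xs @ y # ys) = (nd p (xs @ [y]) \<and> nd (last xs) (y # ys))"
  by (induction p xs rule: nd.induct) auto

lemma nd_snoc_big: "\<forall>x\<in>set u. x < M \<Longrightarrow> nd p (u @ [M]) = nd p u"
  by (induction p u rule: nd.induct) auto

lemma nd_first: "x < p \<Longrightarrow> x < q \<Longrightarrow> nd p (x#r) = nd q (x#r)"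
  by (cases r) auto

lemma prim_split: "\<forall>x\<in>set u. x < M \<Longrightarrow> \<forall>x\<in>set v. x < M \<Longrightarrow>
   prim (u @ M # v) = (prim u \<and> prim v \<and> (u = [] \<longrightarrow> v = []))"
proof (cases u)
  case Nil
  assume "\<forall>x\<in>set v. x < M"
  then show ?thesis using Nil by (cases v) (auto simp: prim_def)
next
  case (Cons a u')
  assume A: "\<forall>x\<in>set u. x < M" "\<forall>x\<in>set v. x < M"
  have l: "last u < M" using A Cons by simp
  have "prim (u @ M # v) = nd (Suc a) (u @ M # v)" using Cons by (simp add: prim_def)
  also have "\<dots> = (nd (Suc a) u \<and> nd (last u) (M # v))"
    using nd_app[of u "Suc a" M v] nd_snoc_big[of u M "Suc a"] A Cons by simp
  also have "nd (last u) (M # v) = prim v"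
  proof (cases v)
    case Nil then show ?thesis by (simp add: prim_def)
  next
    case (Cons b v')
    then have "nd (last u) (M # v) = nd M v" using l by simp
    also have "\<dots> = nd (Suc b) v" using Cons A nd_first[of b M "Suc b" v'] by simp
    finally show ?thesis using Cons by (simp add: prim_def)
  qed
  finally show ?thesis using Cons by (simp add: prim_def)
qed

lemma aa_app: "xs \<noteq> [] \<Longrightarrow> \<forall>x\<in>set xs. x < M \<Longrightarrow> aa p (xs @ M # ys) = aa p xs + aa (last xs) (M # ys)"
proof (induction p xs rule: aa.induct)
  case (1 p) then show ?case by simp
next
  case (2 p x) then show ?case by (cases ys) auto
next
  case (3 p x y xs) then show ?case by auto
qed

lemma aa_first: "x \<le> p \<Longrightarrow> x \<le> q \<Longrightarrow> aa p (x#r) = aa q (x#r)"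
  by (cases r) auto

lemma asc_split: "\<forall>x\<in>set u. x < M \<Longrightarrow> \<forall>x\<in>set v. x < M \<Longrightarrow>
   asc (u @ M # v) = asc u + asc v + (if u \<noteq> [] \<and> v = [] \<and> odd M then 1 else 0)"
proof (cases u)
  case Nil
  assume "\<forall>x\<in>set v. x < M"
  then show ?thesis using Nil aa_first
    by (cases v) (auto simp: asc_def)
next
  case (Cons a u')
  assume A: "\<forall>x\<in>set u. x < M" "\<forall>x\<in>set v. x < M"
  have l: "last u < M" using A Cons by simp
  have "asc (u @ M # v) = aa a (u @ M # v)" using Cons by (simp add: asc_def)
  also have "\<dots> = aa a u + aa (last u) (M # v)"
    using aa_app[of u M a v] A Cons by simp
  also have "aa (last u) (M # v) = asc v + (if v = [] \<and> odd M then 1 else 0)"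
  proof (cases v)
    case Nil then show ?thesis using l by (simp add: asc_def)
  next
    case (Cons b v')
    then have "aa (last u) (M # v) = aa M v" using l A by simp
    also have "\<dots> = aa b v" using Cons A aa_first[of b M b v'] by simp
    finally show ?thesis using Cons by (simp add: asc_def)
  qed
  finally show ?thesis using Cons by (simp add: asc_def)
qed

definition fL :: "nat list \<Rightarrow> int poly" where
  "fL w = (if valid w then monom 1 (des w) else 0)"

definition fR :: "nat list \<Rightarrow> int poly" where
  "fR w = (if valid w \<and> prim w then monom 1 (des w) * [:1,1:] ^ asc w else 0)"

lemma fL_split: "\<forall>x\<in>set u. x < M \<Longrightarrow> \<forall>x\<in>set v. x < M \<Longrightarrow>
  fL (u @ M # v) = (if (u = [] \<or> v \<noteq> []) \<and> even M then 0 else 1) * (if v = [] then 1 else monom 1 1) * fL u * fL v"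
  using valid_split[of u M v] des_split[of u M v]
  by (auto simp: fL_def mult_monom)

lemma fR_split: "\<forall>x\<in>set u. x < M \<Longrightarrow> \<forall>x\<in>set v. x < M \<Longrightarrow>
  fR (u @ M # v) = (if (u = [] \<or> v \<noteq> []) \<and> even M then 0 else 1) * (if u = [] \<and> v \<noteq> [] then 0 else 1)
     * (if v = [] then 1 else monom 1 1) * (if u \<noteq> [] \<and> v = [] \<and> odd M then [:1,1:] else 1) * fR u * fR v"
  using valid_split[of u M v] des_split[of u M v] prim_split[of u M v] asc_split[of u M v]
  by (auto simp: fR_def mult_monom power_add algebra_simps)

definition words :: "nat set \<Rightarrow> nat list set" where
  "words S = {w. distinct w \<and> set w = S}"

lemma words_finite: "finite S \<Longrightarrow> finite (words S)"
proof -
  assume f: "finite S"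
  have "words S \<subseteq> {xs. set xs \<subseteq> S \<and> length xs = card S}"
    unfolding words_def using distinct_card by fastforce
  moreover have "finite {xs. set xs \<subseteq> S \<and> length xs = card S}"
    using finite_lists_length_eq[OF f] .
  ultimately show ?thesis by (rule finite_subset)
qed

lemma words_empty: "words {} = {[]}"
  unfolding words_def by auto

lemma words_decomp:
  assumes fin: "finite S" and M: "M \<in> S" and Mmax: "\<forall>x\<in>S. x \<le> M"
  shows "sum g (words S) = (\<Sum>A\<in>Pow (S - {M}). \<Sum>u\<in>words A. \<Sum>v\<in>words (S - {M} - A). g (u @ M # v))"
proof -
  let ?S' = "S - {M}"
  let ?T = "Sigma (Pow ?S') (\<lambda>A. words A \<times> words (?S' - A))"
  let ?i = "\<lambda>(A, u, v). u @ M # v"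
  let ?tw = "\<lambda>w. takeWhile (\<lambda>x. x \<noteq> M) w"
  let ?dw = "\<lambda>w. tl (dropWhile (\<lambda>x. x \<noteq> M) w)"
  let ?j = "\<lambda>w. (set (?tw w), ?tw w, ?dw w)"
  have eqw: "?tw w @ M # ?dw w = w" if "M \<in> set w" for w
  proof -
    have "dropWhile (\<lambda>x. x \<noteq> M) w \<noteq> []" using that by (simp add: dropWhile_eq_Nil_conv)
    moreover have "hd (dropWhile (\<lambda>x. x \<noteq> M) w) = M" using that hd_dropWhile[of "\<lambda>x. x \<noteq> M" w]
      by (metis calculation)
    ultimately have "dropWhile (\<lambda>x. x \<noteq> M) w = M # ?dw w" by (metis list.collapse)
    then show ?thesis by (metis takeWhile_dropWhile_id)
  qed
  have "sum g (words S) = sum (\<lambda>(A, u, v). g (u @ M # v)) ?T"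
  proof (rule sum.reindex_bij_witness[where i = ?i and j = ?j])
    fix w assume w: "w \<in> words S"
    then have Mw: "M \<in> set w" and dw: "distinct w" and sw: "set w = S" using M by (auto simp: words_def)
    show "?i (?j w) = w" using eqw[OF Mw] by simp
    have d2: "distinct (?tw w @ M # ?dw w)" using eqw[OF Mw] dw by simp
    have s2: "set (?tw w @ M # ?dw w) = S" using eqw[OF Mw] sw by simp
    show "?j w \<in> ?T" using d2 s2 by (auto simp: words_def)
    show "(\<lambda>(A, u, v). g (u @ M # v)) (?j w) = g w" using eqw[OF Mw] by simp
  next
    fix a assume a: "a \<in> ?T"
    obtain A u v where av: "a = (A, u, v)" by (cases a) auto
    with a have A: "A \<subseteq> ?S'" and u: "distinct u" "set u = A" and v: "distinct v" "set v = ?S' - A"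
      by (auto simp: words_def)
    have Mu: "M \<notin> set u" using A u by auto
    have tw: "?tw (u @ M # v) = u" using Mu by (induction u) auto
    have dw: "?dw (u @ M # v) = v" using Mu by (induction u) auto
    show "?j (?i a) = a" using av tw dw u by simp
    show "?i a \<in> words S" using av A u v M by (auto simp: words_def)
  qed
  also have "\<dots> = (\<Sum>A\<in>Pow ?S'. \<Sum>(u, v)\<in>words A \<times> words (?S' - A). g (u @ M # v))"
    using fin words_finite by (subst sum.Sigma) (auto intro!: finite_subset[OF _ fin] words_finite)
  also have "\<dots> = (\<Sum>A\<in>Pow ?S'. \<Sum>u\<in>words A. \<Sum>v\<in>words (?S' - A). g (u @ M # v))"
    by (simp add: sum.cartesian_product)
  finally show ?thesis .
qed

lemma fL_nil: "fL [] = 1" by (simp add: fL_def valid_def)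
lemma fR_nil: "fR [] = 1" by (simp add: fR_def valid_def prim_def asc_def)

lemma main_identity: "finite S \<Longrightarrow> sum fL (words S) = sum fR (words S)"
proof (induction "card S" arbitrary: S rule: less_induct)
  case less
  show ?case
  proof (cases "S = {}")
    case True then show ?thesis by (simp add: words_empty fL_nil fR_nil)
  next
    case False
    define M where "M = Max S"
    have M: "M \<in> S" "\<forall>x\<in>S. x \<le> M" using False less.prems by (auto simp: M_def)
    define S' where "S' = S - {M}"
    have cardS': "card B < card S" if "B \<subseteq> S'" for B
    proof -
      have "B \<subset> S" using that M(1) unfolding S'_def by blast
      then show ?thesis using less.prems psubset_card_mono by blast
    qed
    have finS': "finite S'" using less.prems by (simp add: S'_def)
    have IH: "B \<subseteq> S' \<Longrightarrow> sum fL (words B) = sum fR (words B)" for B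
      using less.hyps[OF cardS'] finite_subset[OF _ finS'] by blast
    define X where "X A = sum fR (words A) * sum fR (words (S' - A))" for A
    define cL where "cL A = (if (A = {} \<or> A \<noteq> S') \<and> even M then 0 else 1) * (if A = S' then 1 else monom 1 1 :: int poly)" for A
    define cR where "cR A = (if (A = {} \<or> A \<noteq> S') \<and> even M then 0 else 1) * (if A = {} \<and> A \<noteq> S' then 0 else 1)
     * (if A = S' then 1 else monom 1 1) * (if A \<noteq> {} \<and> A = S' \<and> odd M then [:1,1:] else 1 :: int poly)" for A
    have small: "\<forall>x\<in>set u. x < M" if "u \<in> words B" "B \<subseteq> S'" for u B
      using that M unfolding words_def S'_def by force
    have emp: "u \<in> words B \<Longrightarrow> (u = []) = (B = {})" for u B by (auto simp: words_def)
    have L: "(\<Sum>u\<in>words A. \<Sum>v\<in>words (S' - A). fL (u @ M # v)) = cL A * X A" if A: "A \<subseteq> S'" for A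
    proof -
      have "(\<Sum>u\<in>words A. \<Sum>v\<in>words (S' - A). fL (u @ M # v))
          = (\<Sum>u\<in>words A. \<Sum>v\<in>words (S' - A). cL A * fL u * fL v)"
      proof (intro sum.cong refl)
        fix u v assume u: "u \<in> words A" and v: "v \<in> words (S' - A)"
        have "(v = []) = (A = S')" using emp[OF v] A by auto
        then show "fL (u @ M # v) = cL A * fL u * fL v"
          using fL_split[OF small[OF u A] small[OF v]] emp[OF u] unfolding cL_def by auto
      qed
      also have "\<dots> = cL A * (\<Sum>u\<in>words A. \<Sum>v\<in>words (S' - A). fL u * fL v)"
        by (simp add: sum_distrib_left mult.assoc)
      also have "\<dots> = cL A * sum fL (words A) * sum fL (words (S' - A))"
        by (simp add: sum_product mult.assoc)
      finally show ?thesis using IH[OF A] IH[of "S' - A"] by (simp add: X_def)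
    qed
    have R: "(\<Sum>u\<in>words A. \<Sum>v\<in>words (S' - A). fR (u @ M # v)) = cR A * X A" if A: "A \<subseteq> S'" for A
    proof -
      have "(\<Sum>u\<in>words A. \<Sum>v\<in>words (S' - A). fR (u @ M # v))
          = (\<Sum>u\<in>words A. \<Sum>v\<in>words (S' - A). cR A * fR u * fR v)"
      proof (intro sum.cong refl)
        fix u v assume u: "u \<in> words A" and v: "v \<in> words (S' - A)"
        have "(v = []) = (A = S')" using emp[OF v] A by auto
        then show "fR (u @ M # v) = cR A * fR u * fR v"
          using fR_split[OF small[OF u A] small[OF v]] emp[OF u] unfolding cR_def by auto
      qed
      also have "\<dots> = cR A * (\<Sum>u\<in>words A. \<Sum>v\<in>words (S' - A). fR u * fR v)"
        by (simp add: sum_distrib_left mult.assoc)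
      also have "\<dots> = cR A * sum fR (words A) * sum fR (words (S' - A))"
        by (simp add: sum_product mult.assoc)
      finally show ?thesis by (simp add: X_def)
    qed
    have "sum fL (words S) = (\<Sum>A\<in>Pow S'. cL A * X A)"
      proof -
      have "sum fL (words S) = (\<Sum>A\<in>Pow S'. \<Sum>u\<in>words A. \<Sum>v\<in>words (S' - A). fL (u @ M # v))"
        using words_decomp[OF less.prems M] unfolding S'_def .
      also have "\<dots> = (\<Sum>A\<in>Pow S'. cL A * X A)"
        by (rule sum.cong[OF refl]) (simp add: L)
      finally show ?thesis .
    qed
    moreover have "sum fR (words S) = (\<Sum>A\<in>Pow S'. cR A * X A)"
      proof -
      have "sum fR (words S) = (\<Sum>A\<in>Pow S'. \<Sum>u\<in>words A. \<Sum>v\<in>words (S' - A). fR (u @ M # v))"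
        using words_decomp[OF less.prems M] unfolding S'_def .
      also have "\<dots> = (\<Sum>A\<in>Pow S'. cR A * X A)"
        by (rule sum.cong[OF refl]) (simp add: R)
      finally show ?thesis .
    qed
    moreover have "(\<Sum>A\<in>Pow S'. cL A * X A) = (\<Sum>A\<in>Pow S'. cR A * X A)"
    proof -
      have X0: "X {} = X S'" by (simp add: X_def words_empty fR_nil)
      have mid: "A \<noteq> {} \<Longrightarrow> A \<noteq> S' \<Longrightarrow> cL A = cR A" for A by (simp add: cL_def cR_def)
      have "(\<Sum>A\<in>Pow S'. cL A * X A - cR A * X A) = (\<Sum>A\<in>{{}, S'}. cL A * X A - cR A * X A)"
        by (rule sum.mono_neutral_right) (auto simp: finS' mid)
      also have "\<dots> = 0"
      proof (cases "S' = {}")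
        case True then show ?thesis by (simp add: cL_def cR_def)
      next
        case False
        have pp: "[:1,1:] = 1 + (monom 1 1 :: int poly)"
          by (simp add: monom_Suc one_pCons)
        show ?thesis using X0 False
          by (cases "even M") (simp_all add: cL_def cR_def pp algebra_simps)
      qed
      finally show ?thesis by (simp add: sum_subtractf)
    qed
    ultimately show ?thesis by simp
  qed
qed

lemma asc_nil: "asc [] = 0" by (simp add: asc_def)

lemma count_lemma: "w \<noteq> [] \<Longrightarrow> distinct w \<Longrightarrow> valid w \<Longrightarrow> prim w \<Longrightarrow>
  asc w + 2 * des w + 1 = card {x\<in>set w. odd x}"
proof (induction "length w" arbitrary: w rule: less_induct)
  case less
  define M where "M = Max (set w)"
  have Mw: "M \<in> set w" using less.prems(1) by (simp add: M_def)
  then obtain u v where w: "w = u @ M # v" by (meson split_list)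
  have dist: "distinct u" "distinct v" "M \<notin> set u" "M \<notin> set v" "set u \<inter> set v = {}"
    using less.prems(2) w by auto
  have le: "\<forall>x\<in>set w. x \<le> M" by (simp add: M_def)
  have su: "\<forall>x\<in>set u. x < M" using le dist w by force
  have sv: "\<forall>x\<in>set v. x < M" using le dist w by force
  note V = valid_split[OF su sv] and P = prim_split[OF su sv]
  note D = des_split[OF su sv] and AS = asc_split[OF su sv]
  have vu: "valid u" "valid v" "prim u" "prim v" "u = [] \<longrightarrow> v = []" "v \<noteq> [] \<longrightarrow> odd M" "u = [] \<longrightarrow> odd M"
    using less.prems w V P by auto
  have card_split: "card {x\<in>set w. odd x} = card {x\<in>set u. odd x} + card {x\<in>set v. odd x} + (if odd M then 1 else 0)"
  proof -
    have "{x\<in>{M}. odd x} = (if odd M then {M} else {})" by auto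
    then have cM: "card {x\<in>{M}. odd x} = (if odd M then 1 else 0)" by simp
    have "{x\<in>set w. odd x} = {x\<in>set u. odd x} \<union> ({x\<in>set v. odd x} \<union> {x\<in>{M}. odd x})"
      using w by auto
    moreover have "card ({x\<in>set u. odd x} \<union> ({x\<in>set v. odd x} \<union> {x\<in>{M}. odd x}))
       = card {x\<in>set u. odd x} + (card {x\<in>set v. odd x} + card {x\<in>{M}. odd x})"
      using dist by (intro trans[OF card_Un_disjoint] arg_cong2[where f="(+)"] refl card_Un_disjoint) auto
    ultimately show ?thesis using cM by simp
  qed
  have IHu: "u \<noteq> [] \<Longrightarrow> asc u + 2 * des u + 1 = card {x\<in>set u. odd x}"
    using less.hyps[of u] w dist vu by auto
  have IHv: "v \<noteq> [] \<Longrightarrow> asc v + 2 * des v + 1 = card {x\<in>set v. odd x}"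
    using less.hyps[of v] w dist vu by auto
  consider "u = []" "v = []" | "u \<noteq> []" "v = []" | "u \<noteq> []" "v \<noteq> []" using vu by blast
  then show ?case
  proof cases
    case 1 then show ?thesis using w card_split D AS vu by (simp add: asc_nil)
  next
    case 2 then show ?thesis using w card_split D AS IHu by (simp add: asc_nil)
  next
    case 3 then show ?thesis using w card_split D AS IHu IHv vu by simp
  qed
qed




lemma all_nat_split: "(\<forall>k::nat. P k) \<longleftrightarrow> P 0 \<and> (\<forall>k. P (Suc k))"
  by (metis not0_implies_Suc)

lemma nd_nth: "nd p l \<longleftrightarrow> (\<forall>k. Suc k < length l \<longrightarrow> l ! Suc k < l ! k \<longrightarrow> (p # l) ! k \<le> l ! k)"
proof (induction p l rule: nd.induct)
  case (1 p x y xs)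
  show ?case
    apply (subst all_nat_split)
    using 1 by auto
qed auto

lemma okd_nth: "okd l \<longleftrightarrow> (\<forall>k. Suc k < length l \<longrightarrow> l ! Suc k < l ! k \<longrightarrow> odd (l ! k) \<and> odd (l ! Suc k))"
proof (induction l rule: okd.induct)
  case (1 a b xs)
  show ?case
    apply (subst all_nat_split)
    using 1 by auto
qed auto

lemma set_nat_split: "{k::nat. P k} = (if P 0 then {0} else {}) \<union> Suc ` {k. P (Suc k)}"
proof (intro set_eqI iffI)
  fix x assume "x \<in> {k. P k}"
  then show "x \<in> (if P 0 then {0} else {}) \<union> Suc ` {k. P (Suc k)}"
    by (cases x) auto
qed (auto split: if_splits)

lemma des_nth: "des l = card {k. Suc k < length l \<and> l ! Suc k < l ! k}"
proof (induction l rule: des.induct)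
  case (1 a b xs)
  have "card {k. Suc k < length (a # b # xs) \<and> (a # b # xs) ! Suc k < (a # b # xs) ! k}
     = card ((if b < a then {0} else {}) \<union> Suc ` {k. Suc k < length (b # xs) \<and> (b # xs) ! Suc k < (b # xs) ! k})"
    by (subst set_nat_split) simp
  also have "\<dots> = (if b < a then 1 else 0) + card {k. Suc k < length (b # xs) \<and> (b # xs) ! Suc k < (b # xs) ! k}"
    by (subst card_Un_disjoint) (auto simp: card_image)
  finally show ?case using 1 by simp
qed auto

context
  fixes m :: nat and w :: "nat list"
  assumes wd: "distinct w" and ws: "set w = {1..m-1}" and m2: "2 \<le> m"
begin

lemma len_w: "length w = m - 1"
  using distinct_card[OF wd] ws by simp

lemma w_ne: "w \<noteq> []" using len_w m2 by auto

lemma c_dist: "distinct (m # w)" using wd ws by auto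

lemma c_set: "set (m # w) = {1..m}" using ws m2 by auto

lemma c_len: "length (m # w) = m" using len_w m2 by simp

lemma sig_nth: "i < m \<Longrightarrow> cycle_of_list (m # w) ((m # w) ! i) = (m # w) ! (Suc i mod m)"
proof -
  assume i: "i < m"
  have "map (cycle_of_list (m # w) ^^ 1) (m # w) = rotate 1 (m # w)"
    using cyclic_rotation[OF c_dist] .
  then have "(map (cycle_of_list (m # w)) (m # w)) ! i = rotate 1 (m # w) ! i" by simp
  moreover have "(map (cycle_of_list (m # w)) (m # w)) ! i = cycle_of_list (m # w) ((m # w) ! i)"
    using i c_len by (intro nth_map) simp
  moreover have "rotate 1 (m # w) ! i = (m # w) ! ((1 + i) mod length (m # w))"
    using i c_len by (intro nth_rotate) simp
  ultimately show ?thesis using c_len by simp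
qed

lemma sig_pow_nth: "i < m \<Longrightarrow> (cycle_of_list (m # w) ^^ k) ((m # w) ! i) = (m # w) ! ((k + i) mod m)"
proof -
  assume i: "i < m"
  have "map (cycle_of_list (m # w) ^^ k) (m # w) = rotate k (m # w)"
    using cyclic_rotation[OF c_dist] .
  then have "(map (cycle_of_list (m # w) ^^ k) (m # w)) ! i = rotate k (m # w) ! i" by simp
  moreover have "(map (cycle_of_list (m # w) ^^ k) (m # w)) ! i = (cycle_of_list (m # w) ^^ k) ((m # w) ! i)"
    using i c_len by (intro nth_map) simp
  moreover have "rotate k (m # w) ! i = (m # w) ! ((k + i) mod length (m # w))"
    using i c_len by (intro nth_rotate) simp
  ultimately show ?thesis using c_len by simp
qed

lemma sig_m: "cycle_of_list (m # w) m = w ! 0"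
  using sig_nth[of 0] m2 by simp

lemma sig_w: "j < length w \<Longrightarrow> cycle_of_list (m # w) (w ! j) = (if Suc j < length w then w ! Suc j else m)"
proof -
  assume j: "j < length w"
  have "cycle_of_list (m # w) ((m # w) ! Suc j) = (m # w) ! (Suc (Suc j) mod m)"
    using sig_nth[of "Suc j"] j len_w by simp
  moreover have "Suc (Suc j) mod m = (if Suc j < length w then Suc (Suc j) else 0)"
  proof (cases "Suc j < length w")
    case True then show ?thesis using len_w m2 by simp
  next
    case False then have "Suc (Suc j) = m" using j len_w m2 by simp
    then show ?thesis using False by simp
  qed
  ultimately show ?thesis by auto
qed

lemma sig_permutes: "cycle_of_list (m # w) permutes {1..m}"
  using cycle_permutes[of "m # w"] c_set by simp

lemma inv_w: "j < length w \<Longrightarrow> inv (cycle_of_list (m # w)) (w ! j) = (m # w) ! j"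
proof -
  assume j: "j < length w"
  have "cycle_of_list (m # w) ((m # w) ! j) = w ! j"
  proof (cases j)
    case 0 then show ?thesis using sig_m by simp
  next
    case (Suc j')
    then show ?thesis using sig_w[of j'] j by simp
  qed
  then show ?thesis using permutes_inverses(2)[OF sig_permutes] by metis
qed

lemma inv_m: "inv (cycle_of_list (m # w)) m = last w"
proof -
  have "cycle_of_list (m # w) (w ! (length w - 1)) = m"
    using sig_w[of "length w - 1"] w_ne by simp
  then show ?thesis using permutes_inverses(2)[OF sig_permutes] w_ne by (metis last_conv_nth)
qed

lemma sig_cyclic: "is_cyclic (cycle_of_list (m # w)) m"
  unfolding is_cyclic_def
proof (intro conjI sig_permutes ballI)
  fix i j assume i: "i \<in> {1..m}" and j: "j \<in> {1..m}"
  obtain a where a: "a < m" "i = (m # w) ! a" using i c_set c_len by (metis in_set_conv_nth)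
  obtain b where b: "b < m" "j = (m # w) ! b" using j c_set c_len by (metis in_set_conv_nth)
  have "(cycle_of_list (m # w) ^^ (b + m - a)) i = (m # w) ! ((b + m - a + a) mod m)"
    using sig_pow_nth a by simp
  also have "(b + m - a + a) mod m = b" using a b by simp
  finally show "\<exists>k. (cycle_of_list (m # w) ^^ k) i = j" using b by blast
qed

lemma w_recover: "j < length w \<Longrightarrow> w ! j = (cycle_of_list (m # w) ^^ Suc j) m"
  using sig_pow_nth[of 0 "Suc j"] len_w by simp

lemma elems: "x \<in> {1..m} \<longleftrightarrow> x = m \<or> (\<exists>j<length w. x = w ! j)"
proof -
  have "x \<in> {1..m} \<longleftrightarrow> x \<in> set (m # w)" using c_set by simp
  also have "\<dots> \<longleftrightarrow> x = m \<or> x \<in> set w" by simp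
  finally show ?thesis by (metis in_set_conv_nth)
qed

lemma w_in: "j < length w \<Longrightarrow> w ! j \<in> {1..m}"
  using elems by blast

lemma w_lt: "j < length w \<Longrightarrow> w ! j < m"
  using ws nth_mem[of j w] m2 by fastforce

lemma drops_eq: "drops (cycle_of_list (m # w)) m = insert m (nth w ` {j. Suc j < length w \<and> w ! Suc j < w ! j})"
proof (intro set_eqI iffI)
  fix x assume "x \<in> drops (cycle_of_list (m # w)) m"
  then have x: "x \<in> {1..m}" "cycle_of_list (m # w) x < x" by (auto simp: drops_def)
  from x(1) consider "x = m" | j where "j < length w" "x = w ! j" using elems by blast
  then show "x \<in> insert m (nth w ` {j. Suc j < length w \<and> w ! Suc j < w ! j})"
  proof cases
    case 1 then show ?thesis by simp
  next
    case 2
    then show ?thesis using x(2) sig_w[of j] w_lt[of j] by (auto split: if_splits)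
  qed
next
  fix x assume "x \<in> insert m (nth w ` {j. Suc j < length w \<and> w ! Suc j < w ! j})"
  then consider "x = m" | j where "Suc j < length w" "w ! Suc j < w ! j" "x = w ! j" by blast
  then show "x \<in> drops (cycle_of_list (m # w)) m"
  proof cases
    case 1 then show ?thesis using sig_m w_lt[of 0] w_ne m2 by (auto simp: drops_def)
  next
    case 2 then show ?thesis using sig_w[of j] w_in[of j] by (auto simp: drops_def)
  qed
qed

lemma dropnum_eq: "dropnum (cycle_of_list (m # w)) m = Suc (des w)"
proof -
  have "m \<notin> nth w ` {j. Suc j < length w \<and> w ! Suc j < w ! j}"
  proof
    assume "m \<in> nth w ` {j. Suc j < length w \<and> w ! Suc j < w ! j}"
    then obtain j where "Suc j < length w" "m = w ! j" by auto
    then show False using w_lt[of j] by simp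
  qed
  moreover have "card (nth w ` {j. Suc j < length w \<and> w ! Suc j < w ! j}) = card {j. Suc j < length w \<and> w ! Suc j < w ! j}"
    by (rule card_image) (rule inj_on_nth[OF wd], auto)
  moreover have "finite (nth w ` {j. Suc j < length w \<and> w ! Suc j < w ! j})"
    by (intro finite_imageI) (rule finite_subset[of _ "{..<length w}"], auto)
  ultimately show ?thesis unfolding dropnum_def drops_eq by (simp add: des_nth)
qed

lemma odd_eq: "odd m \<Longrightarrow> all_drops_odd_odd (cycle_of_list (m # w)) m \<longleftrightarrow> valid w"
  unfolding all_drops_odd_odd_def drops_eq valid_def okd_nth
  using sig_m sig_w w_ne by (auto simp: hd_conv_nth)

lemma dd_eq: "(\<exists>i. is_double_drop (cycle_of_list (m # w)) m i) \<longleftrightarrow> \<not> prim w"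
proof -
  obtain x xs where wx: "w = x # xs" using w_ne by (cases w) auto
  have pre: "(Suc x # w) ! k > w ! k \<longleftrightarrow> (m # w) ! k > w ! k" if "k < length w" for k
    using that w_lt[of 0] wx by (cases k) auto
  have pw: "prim w = nd (Suc x) w" by (simp add: prim_def wx)
  have "\<not> prim w \<longleftrightarrow> (\<exists>k. Suc k < length w \<and> w ! Suc k < w ! k \<and> w ! k < (Suc x # w) ! k)"
    unfolding pw nd_nth by (auto simp: not_le)
  also have "\<dots> \<longleftrightarrow> (\<exists>k. Suc k < length w \<and> w ! Suc k < w ! k \<and> w ! k < (m # w) ! k)"
    using pre by (meson Suc_lessD)
  also have "\<dots> \<longleftrightarrow> (\<exists>i. is_double_drop (cycle_of_list (m # w)) m i)"
  proof
    assume "\<exists>k. Suc k < length w \<and> w ! Suc k < w ! k \<and> w ! k < (m # w) ! k"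
    then obtain k where k: "Suc k < length w" "w ! Suc k < w ! k" "w ! k < (m # w) ! k" by blast
    have "is_double_drop (cycle_of_list (m # w)) m (w ! k)"
      unfolding is_double_drop_def using k inv_w[of k] sig_w[of k] w_in[of k] by auto
    then show "\<exists>i. is_double_drop (cycle_of_list (m # w)) m i" by blast
  next
    assume "\<exists>i. is_double_drop (cycle_of_list (m # w)) m i"
    then obtain i where i: "i \<in> {1..m}" "inv (cycle_of_list (m # w)) i > i" "i > cycle_of_list (m # w) i"
      by (auto simp: is_double_drop_def)
    from i(1) consider "i = m" | j where "j < length w" "i = w ! j" using elems by blast
    then show "\<exists>k. Suc k < length w \<and> w ! Suc k < w ! k \<and> w ! k < (m # w) ! k"
    proof cases
      case 1 then show ?thesis using i(2) inv_m w_lt[of "length w - 1"] w_ne by (simp add: last_conv_nth)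
    next
      case 2 then show ?thesis using i(2,3) inv_w[of j] sig_w[of j] w_lt[of j] by (auto split: if_splits)
    qed
  qed
  finally show ?thesis by simp
qed

end

lemma cyc_surj:
  assumes cyc: "is_cyclic \<sigma> m" and m2: "2 \<le> m"
  shows "\<exists>w. distinct w \<and> set w = {1..m-1} \<and> \<sigma> = cycle_of_list (m # w)"
proof -
  have perm: "\<sigma> permutes {1..m}" using cyc by (simp add: is_cyclic_def)
  have pp: "permutation \<sigma>" using perm by (auto simp: permutation_permutes)
  let ?s = "support \<sigma> m"
  have ds: "distinct ?s" by (rule cycle_of_permutation[OF pp])
  have ss: "set ?s = range (\<lambda>i. (\<sigma> ^^ i) m)" by (rule support_set[OF pp])
  have mm: "m \<in> {1..m}" using m2 by simp
  have sub: "range (\<lambda>i. (\<sigma> ^^ i) m) \<subseteq> {1..m}"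
    using permutes_in_image[OF permutes_funpow[OF perm]] mm by auto
  have sup: "{1..m} \<subseteq> range (\<lambda>i. (\<sigma> ^^ i) m)"
  proof
    fix j assume "j \<in> {1..m}"
    then obtain k where "(\<sigma> ^^ k) m = j" using cyc mm unfolding is_cyclic_def by blast
    then show "j \<in> range (\<lambda>i. (\<sigma> ^^ i) m)" by (metis rangeI)
  qed
  have sset: "set ?s = {1..m}" using ss sub sup by blast
  have lp: "least_power \<sigma> m > 0" by (rule least_power_of_permutation(2)[OF pp])
  define w where "w = map (\<lambda>i. (\<sigma> ^^ i) m) [1..<least_power \<sigma> m]"
  have sw: "?s = m # w" using lp unfolding w_def by (simp add: upt_conv_Cons)
  have wd: "distinct w" and mw: "m \<notin> set w" using ds sw by auto
  have "set (m # w) = {1..m}" using sset sw by simp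
  then have "set w = {1..m} - {m}" using mw by auto
  also have "{1..m} - {m} = {1..m-1}" by auto
  finally have wset: "set w = {1..m-1}" .
  have "\<sigma> = cycle_of_list (m # w)"
  proof
    fix x show "\<sigma> x = cycle_of_list (m # w) x"
    proof (cases "x \<in> set ?s")
      case True then show ?thesis using cycle_restrict[OF pp True] sw by simp
    next
      case False
      then have "x \<notin> {1..m}" using sset by simp
      then show ?thesis using permutes_not_in[OF perm] id_outside_supp[of x "m # w"] False sw by simp
    qed
  qed
  then show ?thesis using wd wset by blast
qed

lemma cyc_inj:
  fixes m :: nat
  assumes "distinct w1" "set w1 = {1..m-1}" "distinct w2" "set w2 = {1..m-1}" "2 \<le> m"
    and eq: "cycle_of_list (m # w1) = cycle_of_list (m # w2)"
  shows "w1 = w2"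
proof (rule nth_equalityI)
  show l: "length w1 = length w2" using len_w[OF assms(1,2,5)] len_w[OF assms(3,4,5)] by simp
  fix j assume "j < length w1"
  then show "w1 ! j = w2 ! j"
    using w_recover[OF assms(1,2,5)] w_recover[OF assms(3,4,5)] l eq by simp
qed

lemma bij_main:
  assumes m2: "2 \<le> m" and om: "odd m"
  shows "bij_betw (\<lambda>w. cycle_of_list (m # w)) {w \<in> words {1..m-1}. valid w} (oddC m)"
proof (rule bij_betw_imageI)
  show "inj_on (\<lambda>w. cycle_of_list (m # w)) {w \<in> words {1..m-1}. valid w}"
    by (rule inj_onI) (use cyc_inj m2 in \<open>auto simp: words_def\<close>)
  show "(\<lambda>w. cycle_of_list (m # w)) ` {w \<in> words {1..m-1}. valid w} = oddC m"
  proof (intro set_eqI iffI)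
    fix s assume "s \<in> (\<lambda>w. cycle_of_list (m # w)) ` {w \<in> words {1..m-1}. valid w}"
    then obtain w where w: "distinct w" "set w = {1..m-1}" "valid w" "s = cycle_of_list (m # w)"
      by (auto simp: words_def)
    then show "s \<in> oddC m"
      using sig_cyclic[OF w(1,2) m2] odd_eq[OF w(1,2) m2 om] by (simp add: oddC_def)
  next
    fix s assume s: "s \<in> oddC m"
    then obtain w where w: "distinct w" "set w = {1..m-1}" "s = cycle_of_list (m # w)"
      using cyc_surj[OF _ m2] by (auto simp: oddC_def)
    then have "valid w" using s odd_eq[OF w(1,2) m2 om] by (simp add: oddC_def)
    then show "s \<in> (\<lambda>w. cycle_of_list (m # w)) ` {w \<in> words {1..m-1}. valid w}"
      using w by (auto simp: words_def)
  qed
qed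



lemma card_odd: "card {x \<in> {1..2*n+2}. odd (x::nat)} = n + 1"
proof -
  have "{x \<in> {1..2*n+2}. odd (x::nat)} = (\<lambda>k. 2*k+1) ` {..n}"
  proof (intro set_eqI iffI)
    fix x assume x: "x \<in> {x \<in> {1..2*n+2}. odd (x::nat)}"
    then have "x = 2 * (x div 2) + 1" "x div 2 \<le> n" by auto presburger+
    then show "x \<in> (\<lambda>k. 2*k+1) ` {..n}" by (metis atMost_iff image_eqI)
  qed auto
  moreover have "inj_on (\<lambda>k::nat. 2*k+1) {..n}" by (auto simp: inj_on_def)
  ultimately show ?thesis by (simp add: card_image)
qed

theorem mainTheorem11:
  fixes n :: nat
  assumes "n \<ge> 1"
  shows "(\<Sum>\<sigma>\<in>oddC (2*n+3). monom (1::int) (dropnum \<sigma> (2*n+3) - 1))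
       = (\<Sum>j=0..n div 2. smult (int (gamma n j)) (monom 1 j * [:1, 1:] ^ (n - 2*j)))"
proof -
  define m where "m = 2*n+3"
  have m2: "2 \<le> m" and om: "odd m" by (auto simp: m_def)
  have mm: "m - 1 = 2*n+2" by (simp add: m_def)
  define W where "W = {w \<in> words {1..m-1}. valid w}"
  define P where "P = {w \<in> words {1..m-1}. valid w \<and> prim w}"
  define g where "g j = monom (1::int) j * [:1, 1:] ^ (n - 2*j)" for j
  have bij: "bij_betw (\<lambda>w. cycle_of_list (m # w)) W (oddC m)" unfolding W_def by (rule bij_main[OF m2 om])
  have wW: "distinct w \<and> set w = {1..m-1}" if "w \<in> words {1..m-1}" for w using that by (simp add: words_def)
  have finw: "finite (words {1..m-1})" by (rule words_finite) simp
  have "(\<Sum>\<sigma>\<in>oddC m. monom (1::int) (dropnum \<sigma> m - 1)) = (\<Sum>w\<in>W. monom 1 (dropnum (cycle_of_list (m # w)) m - 1))"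
    using sum.reindex_bij_betw[OF bij, of "\<lambda>\<sigma>. monom (1::int) (dropnum \<sigma> m - 1)"] by simp
  also have "\<dots> = (\<Sum>w\<in>W. monom 1 (des w))"
    by (rule sum.cong[OF refl]) (use dropnum_eq m2 wW in \<open>auto simp: W_def\<close>)
  also have "\<dots> = sum fL (words {1..m-1})"
    unfolding W_def fL_def using finw by (simp add: sum.inter_filter)
  also have "\<dots> = sum fR (words {1..m-1})" by (rule main_identity) simp
  also have "\<dots> = (\<Sum>w\<in>P. monom 1 (des w) * [:1, 1:] ^ asc w)"
    unfolding P_def fR_def using finw by (simp add: sum.inter_filter)
  also have "\<dots> = (\<Sum>w\<in>P. g (des w))"
  proof (rule sum.cong[OF refl])
    fix w assume w: "w \<in> P"
    then have "w \<noteq> []" "distinct w" "valid w" "prim w" "set w = {1..2*n+2}"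
      using mm by (auto simp: P_def words_def)
    then have "asc w + 2 * des w + 1 = n + 1" using count_lemma card_odd by metis
    then have "asc w = n - 2 * des w" by simp
    then show "monom 1 (des w) * [:1, 1:] ^ asc w = g (des w)"
      by (simp add: g_def)
  qed
  also have "\<dots> = (\<Sum>j=0..n div 2. \<Sum>w\<in>{w \<in> P. des w = j}. g (des w))"
  proof (rule sum.group[symmetric])
    show "finite P" unfolding P_def using finw by simp
    show "finite {0..n div 2}" by simp
    show "des ` P \<subseteq> {0..n div 2}"
    proof
      fix y assume "y \<in> des ` P"
      then obtain w where w: "w \<in> P" "y = des w" by blast
      then have "w \<noteq> []" "distinct w" "valid w" "prim w" "set w = {1..2*n+2}"
        using mm by (auto simp: P_def words_def)
      then have "asc w + 2 * des w + 1 = n + 1" using count_lemma card_odd by metis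
      then show "y \<in> {0..n div 2}" using w by auto
    qed
  qed
  also have "\<dots> = (\<Sum>j=0..n div 2. smult (int (gamma n j)) (g j))"
  proof (rule sum.cong[OF refl])
    fix j
    have "card {w \<in> P. des w = j} = gamma n j"
    proof -
      have "bij_betw (\<lambda>w. cycle_of_list (m # w)) {w \<in> P. des w = j}
              {\<sigma>. primary n \<sigma> \<and> dropnum \<sigma> (2*n+3) = j + 1}"
      proof (rule bij_betw_subset[OF bij])
        show "{w \<in> P. des w = j} \<subseteq> W" by (auto simp: P_def W_def)
        show "(\<lambda>w. cycle_of_list (m # w)) ` {w \<in> P. des w = j} = {\<sigma>. primary n \<sigma> \<and> dropnum \<sigma> (2*n+3) = j + 1}"
        proof (intro set_eqI iffI)
          fix s assume "s \<in> (\<lambda>w. cycle_of_list (m # w)) ` {w \<in> P. des w = j}"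
          then obtain w where w: "w \<in> P" "des w = j" "s = cycle_of_list (m # w)" by blast
          then have wW': "w \<in> W" "distinct w" "set w = {1..m-1}" "prim w" by (auto simp: P_def W_def words_def)
          have "s \<in> oddC m" using bij wW'(1) w(3) by (auto simp: bij_betw_def)
          then show "s \<in> {\<sigma>. primary n \<sigma> \<and> dropnum \<sigma> (2*n+3) = j + 1}"
            using dd_eq[OF wW'(2,3) m2] dropnum_eq[OF wW'(2,3) m2] w wW'
            by (simp add: primary_def m_def)
        next
          fix s assume s: "s \<in> {\<sigma>. primary n \<sigma> \<and> dropnum \<sigma> (2*n+3) = j + 1}"
          then have "s \<in> oddC m" by (simp add: primary_def m_def)
          then obtain w where w: "w \<in> W" "s = cycle_of_list (m # w)"
            using bij by (auto simp: bij_betw_def)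
          then have wW': "distinct w" "set w = {1..m-1}" "valid w" by (auto simp: W_def words_def)
          have "prim w" "des w = j"
            using dd_eq[OF wW'(1,2) m2] dropnum_eq[OF wW'(1,2) m2] s w
            by (auto simp: primary_def m_def)
          then show "s \<in> (\<lambda>w. cycle_of_list (m # w)) ` {w \<in> P. des w = j}"
            using w wW' by (auto simp: P_def W_def)
        qed
      qed
      then show ?thesis unfolding gamma_def by (simp add: bij_betw_same_card)
    qed
    moreover have "(\<Sum>w\<in>{w \<in> P. des w = j}. g (des w)) = of_nat (card {w \<in> P. des w = j}) * g j"
      by simp
    ultimately show "(\<Sum>w\<in>{w \<in> P. des w = j}. g (des w)) = smult (int (gamma n j)) (g j)"
      by (simp add: of_nat_poly)
  qed
  finally show ?thesis unfolding m_def g_def .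
qed

end
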